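(* Let $A\in\mathbb{R}^{r\times n}$ ($r\le n$) have full row rank with singular values $\sigma_1=\sigma_2=\dots=\sigma_r$, let $F\in\mathbb{R}^{K\times n}$ with $FA^T\ne0$, and let $\lambda'>0$. Let $D^*=FA^T(AA^T)^{-1}$, $\tilde D^*=FA^T(AA^T+\lambda'I)^{-1}$, and for $M\in\mathbb{R}^{K\times r}$ let $\gamma(M)=\|M\|_F^2\|A\|_F^2/\|MA\|_F^2$. Then $\gamma(\tilde D^* )=\gamma(D^* )=r$.
   Context: $D^*$ and $\tilde D^*$ are the solutions of the unregularized and $\ell_2$-regularized linear regression problems $\min_D\|F-DA\|_F^2$ and $\min_D\|F-DA\|_F^2+\lambda'\|D\|_F^2$; $\gamma$ is the (relative) spectral risk. *)

theory Defs
  imports "HOL-Analysis.Analysis"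
begin

definition is_eigenvalue :: "real^'r^'r \<Rightarrow> real \<Rightarrow> bool" where
  "is_eigenvalue M \<mu> \<longleftrightarrow> (\<exists>v. v \<noteq> 0 \<and> M *v v = \<mu> *\<^sub>R v)"

text \<open>Singular values of a matrix A in R^(r x n) with r \<le> n: the square roots of the
  eigenvalues of A A^T.\<close>
definition singular_values :: "real^'n^'r \<Rightarrow> real set" where
  "singular_values A = {sqrt \<mu> | \<mu>. is_eigenvalue (A ** transpose A) \<mu>}"

definition fro_sq :: "real^'n^'m \<Rightarrow> real" where
  "fro_sq M = (\<Sum>i\<in>UNIV. \<Sum>j\<in>UNIV. (M $ i $ j)\<^sup>2)"

definition spectral_risk :: "real^'n^'r \<Rightarrow> real^'r^'k \<Rightarrow> real" where
  "spectral_risk A M = fro_sq M * fro_sq A / fro_sq (M ** A)"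

end

theory Submission
  imports Defs
begin

lemma quad_le0: fixes a b :: real assumes "\<forall>t. a*t^2 + b*t \<le> 0" shows "b = 0"
proof (rule ccontr)
  assume "b \<noteq> 0"
  define u where "u = 1/(\<bar>a\<bar>+1)"
  have s0: "u > 0" unfolding u_def by (simp add: add_pos_nonneg)
  have "abs (a * u) < 1" unfolding u_def by (simp add: abs_mult divide_less_eq)
  hence "a * u + 1 > 0" by linarith
  hence "b^2 * u * (a * u+1) > 0" using s0 \<open>b\<noteq>0\<close> by simp
  moreover have "a*(b * u)^2 + b*(b * u) = b^2 * u * (a * u+1)" by (simp add: algebra_simps power2_eq_square)
  ultimately show False using assms[rule_format, of "b * u"] by linarith
qed

lemma sym_max_eig:
  fixes S :: "real^'r^'r"
  assumes sym: "transpose S = S"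
  shows "\<exists>v. v \<noteq> 0 \<and> S *v v = (v \<bullet> (S *v v)) *\<^sub>R v \<and> (\<forall>x. x \<bullet> (S *v x) \<le> (v \<bullet> (S *v v)) * (norm x)^2)"
proof -
  have "compact (sphere (0::real^'r) 1)" by simp
  moreover have "sphere (0::real^'r) 1 \<noteq> {}" by simp
  moreover have "continuous_on (sphere 0 1) (\<lambda>x::real^'r. x \<bullet> (S *v x))"
    by (intro continuous_intros)
  ultimately obtain v where v: "v \<in> sphere 0 1" and vmax: "\<forall>y\<in>sphere 0 1. y \<bullet> (S *v y) \<le> v \<bullet> (S *v v)"
    using continuous_attains_sup by blast
  define M where "M = v \<bullet> (S *v v)"
  have nv: "norm v = 1" using v by simp
  have bound: "x \<bullet> (S *v x) \<le> M * (norm x)^2" for x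
  proof (cases "x = 0")
    case True then show ?thesis by simp
  next
    case False
    define y where "y = (1/norm x) *\<^sub>R x"
    have "y \<in> sphere 0 1" using False by (simp add: y_def)
    hence "y \<bullet> (S *v y) \<le> M" using vmax M_def by blast
    moreover have "y \<bullet> (S *v y) = (x \<bullet> (S *v x)) / (norm x)^2"
      by (simp add: y_def matrix_vector_mult_scaleR power2_eq_square)
    ultimately show ?thesis using False by (simp add: divide_le_eq mult.commute)
  qed
  have symdot: "a \<bullet> (S *v b) = b \<bullet> (S *v a)" for a b
    by (metis dot_lmul_matrix inner_commute sym transpose_matrix_vector)
  have orth: "y \<bullet> (S *v v - M *\<^sub>R v) = 0" for y
  proof -
    have "\<forall>t. (y \<bullet> (S *v y) - M * (y \<bullet> y)) * t^2 + (2 * (y \<bullet> (S *v v - M *\<^sub>R v))) * t \<le> 0"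
    proof
      fix t :: real
      have "(v + t *\<^sub>R y) \<bullet> (S *v (v + t *\<^sub>R y)) \<le> M * (norm (v + t *\<^sub>R y))^2" by (rule bound)
      moreover have "(v + t *\<^sub>R y) \<bullet> (S *v (v + t *\<^sub>R y)) = M + 2*t*(y \<bullet> (S *v v)) + t^2 * (y \<bullet> (S *v y))"
        using symdot[of v y]
        by (simp add: matrix_vector_right_distrib matrix_vector_mult_scaleR inner_add_left inner_add_right M_def power2_eq_square algebra_simps)
      moreover have "(norm (v + t *\<^sub>R y))^2 = 1 + 2*t*(y \<bullet> v) + t^2 * (y \<bullet> y)"
      proof -
        have "(norm (v + t *\<^sub>R y))^2 = (v + t *\<^sub>R y) \<bullet> (v + t *\<^sub>R y)" by (simp add: power2_norm_eq_inner)
        also have "\<dots> = v \<bullet> v + 2*t*(y \<bullet> v) + t^2 * (y \<bullet> y)"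
          by (simp add: inner_add_left inner_add_right power2_eq_square algebra_simps inner_commute)
        also have "v \<bullet> v = 1" using nv by (simp add: dot_square_norm)
        finally show ?thesis .
      qed
      ultimately show "(y \<bullet> (S *v y) - M * (y \<bullet> y)) * t^2 + (2 * (y \<bullet> (S *v v - M *\<^sub>R v))) * t \<le> 0"
        by (simp add: inner_diff_right algebra_simps)
    qed
    from quad_le0[OF this] show ?thesis by simp
  qed
  have "S *v v - M *\<^sub>R v = 0" using orth[of "S *v v - M *\<^sub>R v"] by simp
  hence "S *v v = M *\<^sub>R v" by simp
  moreover have "v \<noteq> 0" using nv by auto
  ultimately show ?thesis using bound M_def by blast
qed

lemma symdot_gen: fixes S :: "real^'r^'r" assumes "transpose S = S"
  shows "a \<bullet> (S *v b) = b \<bullet> (S *v a)"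
  by (metis dot_lmul_matrix inner_commute assms transpose_matrix_vector)

lemma quad_zero_sym:
  fixes B :: "real^'r^'r"
  assumes sym: "transpose B = B" and q: "\<And>x. x \<bullet> (B *v x) = 0"
  shows "B = 0"
proof -
  have "B *v x = 0" for x
  proof -
    have "(x + B *v x) \<bullet> (B *v (x + B *v x)) = 0" by (rule q)
    hence "(B *v x) \<bullet> (B *v x) + x \<bullet> (B *v (B *v x)) = 0"
      using q[of x] q[of "B *v x"]
      by (simp add: matrix_vector_right_distrib inner_add_left inner_add_right)
    moreover have "x \<bullet> (B *v (B *v x)) = (B *v x) \<bullet> (B *v x)" using symdot_gen[OF sym] by blast
    ultimately show ?thesis by simp
  qed
  thus ?thesis by (simp add: matrix_eq)
qed

lemma fro_trace: "fro_sq (M::real^'n^'m) = trace (M ** transpose M)"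
  unfolding fro_sq_def trace_def matrix_matrix_mult_def transpose_def
  by (simp add: power2_eq_square)

lemma fro_scale: "fro_sq (k *\<^sub>R (M::real^'n^'m)) = k^2 * fro_sq M"
  unfolding fro_sq_def by (simp add: sum_distrib_left power_mult_distrib)

lemma fro_pos: "(M::real^'n^'m) \<noteq> 0 \<Longrightarrow> fro_sq M > 0"
proof -
  assume "M \<noteq> 0"
  then obtain i j where "M $ i $ j \<noteq> 0" by (metis vec_eq_iff zero_index)
  hence "(M $ i $ j)^2 > 0" by simp
  also have "(M $ i $ j)^2 \<le> (\<Sum>j\<in>UNIV. (M $ i $ j)\<^sup>2)"
    by (rule member_le_sum) auto
  also have "\<dots> \<le> fro_sq M" unfolding fro_sq_def
    by (rule member_le_sum[where f="\<lambda>i. \<Sum>j\<in>UNIV. (M $ i $ j)\<^sup>2"]) (auto intro: sum_nonneg)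
  finally show ?thesis .
qed

lemma mult_mat_right: "(X::real^'n^'m) ** mat k = k *\<^sub>R X"
  by (simp add: vec_eq_iff matrix_matrix_mult_def mat_def if_distrib if_distribR sum.delta' cong: if_cong)

lemma mult_mat_left: "mat k ** (X::real^'n^'m) = k *\<^sub>R X"
  by (simp add: vec_eq_iff matrix_matrix_mult_def mat_def if_distrib if_distribR sum.delta cong: if_cong)

lemma matrix_inv_mat: assumes "c \<noteq> (0::real)" shows "matrix_inv (mat c :: real^'r^'r) = mat (1/c)"
proof -
  have ex: "\<exists>A'::real^'r^'r. mat c ** A' = mat 1 \<and> A' ** mat c = mat 1"
  proof (rule exI[of _ "mat (1/c)"])
    have "(1/c) *\<^sub>R (mat c :: real^'r^'r) = mat 1" "c *\<^sub>R (mat (1/c) :: real^'r^'r) = mat 1"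
      using assms by (simp_all add: vec_eq_iff mat_def)
    thus "mat c ** (mat (1/c) :: real^'r^'r) = mat 1 \<and> mat (1/c) ** (mat c :: real^'r^'r) = mat 1"
      by (simp add: mult_mat_right)
  qed
  define A' where "A' = matrix_inv (mat c :: real^'r^'r)"
  have "mat c ** A' = mat 1" unfolding A'_def matrix_inv_def using someI_ex[OF ex] by blast
  hence "c *\<^sub>R A' = mat 1" by (simp add: mult_mat_left)
  hence "(1/c) *\<^sub>R (c *\<^sub>R A') = (1/c) *\<^sub>R mat 1" by simp
  hence "A' = (1/c) *\<^sub>R mat 1" using assms by simp
  thus ?thesis unfolding A'_def by (simp add: vec_eq_iff mat_def)
qed

lemma trace_scale: "trace (k *\<^sub>R (M::real^'n^'n)) = k * trace M"
  by (simp add: trace_def sum_distrib_left)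

lemma risk_lemma:
  fixes A :: "real^'n^'r" and X :: "real^'r^'k"
  assumes S: "A ** transpose A = mat \<mu>" and mu: "\<mu> > 0" and k: "k \<noteq> 0" and X: "X \<noteq> 0"
  shows "fro_sq (k *\<^sub>R X) * fro_sq A / fro_sq ((k *\<^sub>R X) ** A) = real CARD('r)"
proof -
  have fa: "fro_sq A = \<mu> * real CARD('r)" by (simp add: fro_trace S trace_def mat_def)
  have "fro_sq (X ** A) = trace (X ** (A ** transpose A) ** transpose X)"
    by (simp add: fro_trace matrix_transpose_mul matrix_mul_assoc)
  also have "\<dots> = \<mu> * fro_sq X" by (simp add: S mult_mat_right fro_trace trace_scale flip: scalar_matrix_assoc)
  finally have fxa: "fro_sq (X ** A) = \<mu> * fro_sq X" .
  have "(k *\<^sub>R X) ** A = k *\<^sub>R (X ** A)" by (simp add: scalar_matrix_assoc)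
  hence "fro_sq ((k *\<^sub>R X) ** A) = k^2 * (\<mu> * fro_sq X)" by (simp add: fro_scale fxa)
  moreover have "fro_sq X > 0" using fro_pos[OF X] .
  ultimately show ?thesis using mu k by (simp add: fro_scale fa)
qed


theorem corollary4:
  fixes A :: "real^'n^'r" and F :: "real^'n^'k" and lam :: real
  assumes "CARD('r) \<le> CARD('n)"
    and "rank A = CARD('r)"
    and "\<exists>\<sigma>. singular_values A = {\<sigma>}"
    and "F ** transpose A \<noteq> 0"
    and "lam > 0"
  shows "spectral_risk A (F ** transpose A ** matrix_inv (A ** transpose A + lam *\<^sub>R mat 1))
           = real CARD('r)
       \<and> spectral_risk A (F ** transpose A ** matrix_inv (A ** transpose A)) = real CARD('r)"
proof -
  obtain \<sigma> where sv: "singular_values A = {\<sigma>}" using assms(3) by blast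
  define S where "S = A ** transpose A"
  have symS: "transpose S = S" unfolding S_def by (simp add: matrix_transpose_mul)
  have eig_sv: "sqrt \<mu> = \<sigma>" if "is_eigenvalue S \<mu>" for \<mu>
  proof -
    have "sqrt \<mu> \<in> singular_values A" using that unfolding singular_values_def S_def by blast
    thus ?thesis using sv by simp
  qed
  have eig_nn: "\<mu> \<ge> 0" if "S *v v = \<mu> *\<^sub>R v" "v \<noteq> 0" for \<mu> v
  proof -
    have "v \<bullet> (S *v v) = (v v* A) \<bullet> (v v* A)"
      by (simp add: S_def dot_lmul_matrix flip: matrix_vector_mul_assoc)
    hence "0 \<le> v \<bullet> (S *v v)" by simp
    also have "v \<bullet> (S *v v) = \<mu> * (v \<bullet> v)" using that by simp
    finally have "0 \<le> \<mu> * (v \<bullet> v)" .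
    moreover have "v \<bullet> v > 0" using that by simp
    ultimately show ?thesis by (simp add: zero_le_mult_iff)
  qed
  obtain v1 where v1: "v1 \<noteq> 0" "S *v v1 = (v1 \<bullet> (S *v v1)) *\<^sub>R v1"
      "\<forall>x. x \<bullet> (S *v x) \<le> (v1 \<bullet> (S *v v1)) * (norm x)^2"
    using sym_max_eig[OF symS] by blast
  have symS': "transpose (-S) = -S" using symS by (simp add: vec_eq_iff transpose_def)
  obtain v2 where v2: "v2 \<noteq> 0" "(-S) *v v2 = (v2 \<bullet> ((-S) *v v2)) *\<^sub>R v2"
      "\<forall>x. x \<bullet> ((-S) *v x) \<le> (v2 \<bullet> ((-S) *v v2)) * (norm x)^2"
    using sym_max_eig[OF symS'] by blast
  define \<mu> where "\<mu> = v1 \<bullet> (S *v v1)"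
  define m where "m = v2 \<bullet> (S *v v2)"
  have negS: "(-S) *v x = - (S *v x)" for x by (simp add: matrix_vector_mult_def vec_eq_iff sum_negf)
  have e2: "S *v v2 = m *\<^sub>R v2" using v2(2) unfolding m_def negS by (metis inner_minus_right minus_minus scaleR_minus_left)
  have b2: "x \<bullet> (S *v x) \<ge> m * (norm x)^2" for x using v2(3) unfolding m_def negS by simp
  have e1: "S *v v1 = \<mu> *\<^sub>R v1" using v1(2) unfolding \<mu>_def .
  have "sqrt \<mu> = sqrt m" using eig_sv e1 e2 v1(1) v2(1) unfolding is_eigenvalue_def by metis
  moreover have "\<mu> \<ge> 0" "m \<ge> 0" using eig_nn e1 e2 v1(1) v2(1) by auto
  ultimately have "m = \<mu>" by simp
  have quad: "x \<bullet> ((S - mat \<mu>) *v x) = 0" for x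
  proof -
    have "(S - mat \<mu>) *v x = S *v x - \<mu> *\<^sub>R x"
      by (simp add: matrix_vector_mult_def mat_def vec_eq_iff if_distrib if_distribR sum_subtractf cong: if_cong algebra_simps)
    moreover have "x \<bullet> (S *v x) = \<mu> * (norm x)^2"
      using v1(3) b2[of x] \<open>m = \<mu>\<close> unfolding \<mu>_def by (metis order_antisym)
    ultimately show ?thesis by (simp add: inner_diff_right dot_square_norm)
  qed
  have "transpose (S - mat \<mu>) = S - mat \<mu>" using symS by (simp add: vec_eq_iff transpose_def mat_def)
  from quad_zero_sym[OF this quad] have Sm: "A ** transpose A = mat \<mu>" unfolding S_def by simp
  have "\<mu> \<noteq> 0"
  proof
    assume "\<mu> = 0"
    hence "fro_sq A = 0" by (simp add: fro_trace Sm trace_def mat_def)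
    hence "\<forall>i\<in>UNIV. \<forall>j\<in>UNIV. (A $ i $ j)^2 = 0" unfolding fro_sq_def
      by (simp add: sum_nonneg_eq_0_iff sum_nonneg)
    hence "A = 0" by (simp add: vec_eq_iff)
    hence "rank A = 0" by simp
    thus False using assms(2) by simp
  qed
  with \<open>\<mu> \<ge> 0\<close> have mupos: "\<mu> > 0" by simp
  have inv1: "matrix_inv (A ** transpose A + lam *\<^sub>R mat 1) = mat (1/(\<mu>+lam))"
  proof -
    have "A ** transpose A + lam *\<^sub>R mat 1 = (mat (\<mu>+lam) :: real^'r^'r)"
      by (simp add: Sm vec_eq_iff mat_def)
    thus ?thesis using mupos assms(5) by (simp add: matrix_inv_mat)
  qed
  have inv2: "matrix_inv (A ** transpose A) = mat (1/\<mu>)"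
    using mupos by (simp add: Sm matrix_inv_mat)
  show ?thesis
    unfolding inv1 inv2 spectral_risk_def mult_mat_right
    using risk_lemma[OF Sm mupos _ assms(4)] mupos assms(5) by simp
qed

end
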